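(* Let $n\ge2$, $k\in\{1,\ldots,n\}$, $r\in\mathbb{R}$, and $x^0\in\mathbb{R}^n$ with $x^0_1\ge\cdots\ge x^0_n$ and $\sum_{i=1}^k x^0_i>r$. Suppose that along the trajectory of the ESGS procedure a transition from $(k_0,k_1)$ to $(k_0,k_1+1)$ occurs. Then the optimal index pair $(\bar k_0,\bar k_1)$, i.e. the index pair satisfying all of $\mathtt{kkt}_1,\ldots,\mathtt{kkt}_5$, satisfies $\bar k_0\le k_0$ and $\bar k_1\ge k_1$.
   Context: Conventions: $x^0_0:=+\infty$, $x^0_{n+1}:=-\infty$. For $k_0\in\{0,\ldots,k-1\}$ and $k_1\in\{k,\ldots,n\}$ define $S_\alpha=\sum_{i=1}^{k_0}x^0_i-r$, $S_\beta=\sum_{i=k_0+1}^{k_1}x^0_i$, $\rho=k_0(k_1-k_0)+(k-k_0)^2$, $\theta(k_0,k_1)=(k_0S_\beta-(k-k_0)S_\alpha)/\rho$, $\lambda(k_0,k_1)=((k-k_0)S_\beta+(k_1-k_0)S_\alpha)/\rho$. KKT indicators: $\mathtt{kkt}_1$: $\lambda>0$; $\mathtt{kkt}_2$: $x^0_{k_0}>\theta+\lambda$; $\mathtt{kkt}_3$: $\theta+\lambda\ge x^0_{k_0+1}$; $\mathtt{kkt}_4$: $x^0_{k_1}\ge\theta$; $\mathtt{kkt}_5$: $\theta>x^0_{k_1+1}$. An index pair satisfying all five indicators yields the solution of the sorted projection problem. ESGS trajectory: start at $(k_0,k_1)=(k-1,k)$ and repeat: if $\mathtt{kkt}_2\wedge\mathtt{kkt}_5$,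 stop; else if $\mathtt{kkt}_2$, $k_1\gets k_1+1$; else $k_0\gets k_0-1$. *)

theory Defs
  imports Complex_Main "HOL-Library.Extended_Real"
begin

text \<open>Vector x0 in R^n is represented as x :: nat => real using indices 1..n.
  Extended vector with the conventions x_0 = +infinity, x_(n+1) = -infinity.\<close>
definition xext :: "nat \<Rightarrow> (nat \<Rightarrow> real) \<Rightarrow> nat \<Rightarrow> ereal" where
  "xext n x i = (if i = 0 then \<infinity> else if i = n + 1 then -\<infinity> else ereal (x i))"

definition S_alpha :: "(nat \<Rightarrow> real) \<Rightarrow> real \<Rightarrow> nat \<Rightarrow> real" where
  "S_alpha x r k0 = (\<Sum>i=1..k0. x i) - r"

definition S_beta :: "(nat \<Rightarrow> real) \<Rightarrow> nat \<Rightarrow> nat \<Rightarrow> real" where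
  "S_beta x k0 k1 = (\<Sum>i=k0+1..k1. x i)"

definition rho :: "nat \<Rightarrow> nat \<Rightarrow> nat \<Rightarrow> real" where
  "rho k k0 k1 = real k0 * (real k1 - real k0) + (real k - real k0)^2"

definition theta :: "nat \<Rightarrow> (nat \<Rightarrow> real) \<Rightarrow> real \<Rightarrow> nat \<Rightarrow> nat \<Rightarrow> real" where
  "theta k x r k0 k1 =
     (real k0 * S_beta x k0 k1 - (real k - real k0) * S_alpha x r k0) / rho k k0 k1"

definition lam :: "nat \<Rightarrow> (nat \<Rightarrow> real) \<Rightarrow> real \<Rightarrow> nat \<Rightarrow> nat \<Rightarrow> real" where
  "lam k x r k0 k1 =
     ((real k - real k0) * S_beta x k0 k1 + (real k1 - real k0) * S_alpha x r k0) / rho k k0 k1"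

definition kkt1 :: "nat \<Rightarrow> nat \<Rightarrow> (nat \<Rightarrow> real) \<Rightarrow> real \<Rightarrow> nat \<Rightarrow> nat \<Rightarrow> bool" where
  "kkt1 n k x r k0 k1 \<longleftrightarrow> lam k x r k0 k1 > 0"

definition kkt2 :: "nat \<Rightarrow> nat \<Rightarrow> (nat \<Rightarrow> real) \<Rightarrow> real \<Rightarrow> nat \<Rightarrow> nat \<Rightarrow> bool" where
  "kkt2 n k x r k0 k1 \<longleftrightarrow> xext n x k0 > ereal (theta k x r k0 k1 + lam k x r k0 k1)"

definition kkt3 :: "nat \<Rightarrow> nat \<Rightarrow> (nat \<Rightarrow> real) \<Rightarrow> real \<Rightarrow> nat \<Rightarrow> nat \<Rightarrow> bool" where
  "kkt3 n k x r k0 k1 \<longleftrightarrow> ereal (theta k x r k0 k1 + lam k x r k0 k1) \<ge> xext n x (k0 + 1)"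

definition kkt4 :: "nat \<Rightarrow> nat \<Rightarrow> (nat \<Rightarrow> real) \<Rightarrow> real \<Rightarrow> nat \<Rightarrow> nat \<Rightarrow> bool" where
  "kkt4 n k x r k0 k1 \<longleftrightarrow> xext n x k1 \<ge> ereal (theta k x r k0 k1)"

definition kkt5 :: "nat \<Rightarrow> nat \<Rightarrow> (nat \<Rightarrow> real) \<Rightarrow> real \<Rightarrow> nat \<Rightarrow> nat \<Rightarrow> bool" where
  "kkt5 n k x r k0 k1 \<longleftrightarrow> ereal (theta k x r k0 k1) > xext n x (k1 + 1)"

definition all_kkt :: "nat \<Rightarrow> nat \<Rightarrow> (nat \<Rightarrow> real) \<Rightarrow> real \<Rightarrow> nat \<Rightarrow> nat \<Rightarrow> bool" where
  "all_kkt n k x r k0 k1 \<longleftrightarrow> kkt1 n k x r k0 k1 \<and> kkt2 n k x r k0 k1 \<and> kkt3 n k x r k0 k1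
      \<and> kkt4 n k x r k0 k1 \<and> kkt5 n k x r k0 k1"

inductive esgs_visits :: "nat \<Rightarrow> nat \<Rightarrow> (nat \<Rightarrow> real) \<Rightarrow> real \<Rightarrow> nat \<Rightarrow> nat \<Rightarrow> bool"
  for n k x r where
  start: "esgs_visits n k x r (k - 1) k"
| inc: "esgs_visits n k x r k0 k1 \<Longrightarrow> \<not> (kkt2 n k x r k0 k1 \<and> kkt5 n k x r k0 k1)
        \<Longrightarrow> kkt2 n k x r k0 k1 \<Longrightarrow> esgs_visits n k x r k0 (k1 + 1)"
| dec: "esgs_visits n k x r k0 k1 \<Longrightarrow> \<not> (kkt2 n k x r k0 k1 \<and> kkt5 n k x r k0 k1)
        \<Longrightarrow> \<not> kkt2 n k x r k0 k1 \<Longrightarrow> esgs_visits n k x r (k0 - 1) k1"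

definition esgs_inc_transition :: "nat \<Rightarrow> nat \<Rightarrow> (nat \<Rightarrow> real) \<Rightarrow> real \<Rightarrow> nat \<Rightarrow> nat \<Rightarrow> bool" where
  "esgs_inc_transition n k x r k0 k1 \<longleftrightarrow>
     esgs_visits n k x r k0 k1 \<and> \<not> (kkt2 n k x r k0 k1 \<and> kkt5 n k x r k0 k1) \<and> kkt2 n k x r k0 k1"

end

theory Submission imports Defs begin

definition RR :: "real \<Rightarrow> real \<Rightarrow> real \<Rightarrow> real" where
  "RR K p m = p*(m-p)+(K-p)^2"
definition Th :: "real \<Rightarrow> real \<Rightarrow> real \<Rightarrow> real \<Rightarrow> real \<Rightarrow> real" where
  "Th K p m a b = (p*b - (K-p)*a) / RR K p m"
definition Mu :: "real \<Rightarrow> real \<Rightarrow> real \<Rightarrow> real \<Rightarrow> real \<Rightarrow> real" where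
  "Mu K p m a b = (K*b + (m-K)*a) / RR K p m"

lemma fracA1:
  fixes R0 R1 N0 N1 M0 K y :: real
  assumes "R0 \<noteq> 0" "R1 \<noteq> 0" "R0*N1 - R1*N0 = K*(M0 - y*R0)"
  shows "R1*(N1/R1 - N0/R0) = K*(M0/R0 - y)"
proof -
  have "R1*(N1/R1 - N0/R0) = (R0*N1 - R1*N0)/R0" using assms by (simp add: field_simps)
  also have "\<dots> = K*(M0/R0 - y)" using assms by (simp add: field_simps)
  finally show ?thesis .
qed

lemma fracA2:
  fixes R0 R1 M0 M1 y :: real
  assumes "R0 \<noteq> 0" "R1 \<noteq> 0" "M1 - y*R1 = M0 - y*R0"
  shows "R1*(M1/R1 - y) = R0*(M0/R0 - y)"
  using assms by (simp add: right_diff_distrib mult.commute)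

lemma fracB1:
  fixes R0 R1 N0 N1 p y :: real
  assumes "R0 \<noteq> 0" "R1 \<noteq> 0" "R0*N1 - R1*N0 = p*(y*R1 - N1)"
  shows "R0*(N1/R1 - N0/R0) = p*(y - N1/R1)"
proof -
  have "R0*(N1/R1 - N0/R0) = (R0*N1 - R1*N0)/R1" using assms by (simp add: field_simps)
  also have "\<dots> = p*(y - N1/R1)" using assms by (simp add: field_simps)
  finally show ?thesis .
qed

lemma fracB2:
  fixes R p M N a K :: real
  assumes "R \<noteq> 0" "p \<noteq> 0" "p*M = a*R + K*N"
  shows "M/R = (a + K*(N/R))/p"
proof -
  have "M/R = (p*M)/(p*R)" using assms(1,2) by simp
  also have "\<dots> = (a*R+K*N)/(p*R)" using assms(3) by simp
  also have "\<dots> = (a + K*(N/R))/p" using assms by (simp add: field_simps)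
  finally show ?thesis .
qed

lemma algA1:
  assumes "RR K (q-1) m \<noteq> 0" "RR K q m \<noteq> 0"
  shows "RR K q m * (Th K q m (a+y) (b-y) - Th K (q-1) m a b) = K * (Mu K (q-1) m a b - y)"
proof -
  have poly: "RR K (q-1) m * (q*(b-y) - (K-q)*(a+y)) - RR K q m * ((q-1)*b - (K-(q-1))*a)
      = K * ((K*b + (m-K)*a) - y * RR K (q-1) m)"
    unfolding RR_def power2_eq_square by algebra
  show ?thesis using fracA1[OF assms poly] unfolding Th_def Mu_def .
qed

lemma algA2:
  assumes "RR K (q-1) m \<noteq> 0" "RR K q m \<noteq> 0"
  shows "RR K q m * (Mu K q m (a+y) (b-y) - y) = RR K (q-1) m * (Mu K (q-1) m a b - y)"
proof -
  have poly: "(K*(b-y) + (m-K)*(a+y)) - y * RR K q m = (K*b + (m-K)*a) - y * RR K (q-1) m"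
    unfolding RR_def power2_eq_square by algebra
  show ?thesis using fracA2[OF assms(1,2) poly] unfolding Th_def Mu_def .
qed

lemma algB1:
  assumes "RR K p m \<noteq> 0" "RR K p (m+1) \<noteq> 0"
  shows "RR K p m * (Th K p (m+1) a (b+y) - Th K p m a b) = p * (y - Th K p (m+1) a (b+y))"
proof -
  have poly: "RR K p m * (p*(b+y) - (K-p)*a) - RR K p (m+1) * (p*b - (K-p)*a)
      = p * (y * RR K p (m+1) - (p*(b+y) - (K-p)*a))"
    unfolding RR_def power2_eq_square by algebra
  show ?thesis using fracB1[OF assms poly] unfolding Th_def .
qed

lemma algB2:
  assumes "RR K p m \<noteq> 0" "p \<noteq> 0"
  shows "Mu K p m a b = (a + K * Th K p m a b) / p"
proof -
  have poly: "p * (K*b + (m-K)*a) = a * RR K p m + K * (p*b - (K-p)*a)"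
    unfolding RR_def power2_eq_square by algebra
  show ?thesis using fracB2[OF assms poly] unfolding Th_def Mu_def .
qed

lemma theta_Th: "theta k x r k0 k1 = Th (real k) (real k0) (real k1) (S_alpha x r k0) (S_beta x k0 k1)"
  unfolding theta_def Th_def RR_def rho_def by simp

lemma mu_Mu: "theta k x r k0 k1 + lam k x r k0 k1 = Mu (real k) (real k0) (real k1) (S_alpha x r k0) (S_beta x k0 k1)"
  unfolding theta_def lam_def Mu_def RR_def rho_def by (simp add: add_divide_distrib[symmetric] algebra_simps)

lemma Sa_step: "1 \<le> j \<Longrightarrow> S_alpha x r j = S_alpha x r (j-1) + x j"
  unfolding S_alpha_def by (cases j) auto

lemma Sb_step0: "1 \<le> j \<Longrightarrow> j \<le> m \<Longrightarrow> S_beta x (j-1) m = S_beta x j m + x j"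
  unfolding S_beta_def by (cases j) (auto simp: sum.atLeast_Suc_atMost)

lemma Sb_step1: "p \<le> m \<Longrightarrow> S_beta x p (m+1) = S_beta x p m + x (m+1)"
  unfolding S_beta_def by simp

lemma RR_pos: "k0 < k \<Longrightarrow> k0 \<le> k1 \<Longrightarrow> RR (real k) (real k0) (real k1) > 0"
  unfolding RR_def by (simp add: add_nonneg_pos)


lemma xext_in: "1 \<le> i \<Longrightarrow> i \<le> n \<Longrightarrow> xext n x i = ereal (x i)"
  unfolding xext_def by simp

lemma partA:
  fixes n k :: nat and r :: real and x :: "nat \<Rightarrow> real"
  assumes kn: "k \<le> n" and k1: "1 \<le> k"
    and mono: "\<And>i j. 1 \<le> i \<Longrightarrow> i \<le> j \<Longrightarrow> j \<le> n \<Longrightarrow> x j \<le> x i"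
    and kb: "kb0 \<le> k - 1" "k \<le> kb1" "kb1 \<le> n"
    and k3: "kkt3 n k x r kb0 kb1"
  shows "kb0 + d < k \<Longrightarrow> theta k x r kb0 kb1 \<le> theta k x r (kb0+d) kb1
      \<and> x (kb0+d+1) \<le> theta k x r (kb0+d) kb1 + lam k x r (kb0+d) kb1"
proof (induction d)
  case 0
  have "xext n x (kb0+1) = ereal (x (kb0+1))" using 0 kn by (intro xext_in) auto
  then show ?case using k3 unfolding kkt3_def by simp
next
  case (Suc d)
  define q where "q = kb0 + Suc d"
  have IH: "theta k x r kb0 kb1 \<le> theta k x r (q-1) kb1"
      "x q \<le> theta k x r (q-1) kb1 + lam k x r (q-1) kb1"
    using Suc unfolding q_def by auto
  have q1: "1 \<le> q" "q < k" "q \<le> kb1" using Suc.prems kb unfolding q_def by auto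
  have rq: "real (q-1) = real q - 1" using q1 by simp
  have R0: "RR (real k) (real q - 1) (real kb1) > 0"
    using RR_pos[of "q-1" k kb1] q1 rq by simp
  have R1: "RR (real k) (real q) (real kb1) > 0"
    using RR_pos[of q k kb1] q1 by simp
  have Sa: "S_alpha x r q = S_alpha x r (q-1) + x q" using Sa_step q1 by simp
  have Sb: "S_beta x q kb1 = S_beta x (q-1) kb1 - x q" using Sb_step0[of q kb1 x] q1 by simp
  have th: "theta k x r q kb1 = Th (real k) (real q) (real kb1) (S_alpha x r (q-1) + x q) (S_beta x (q-1) kb1 - x q)"
    by (simp add: theta_Th Sa Sb)
  have th0: "theta k x r (q-1) kb1 = Th (real k) (real q - 1) (real kb1) (S_alpha x r (q-1)) (S_beta x (q-1) kb1)"
    by (simp only: theta_Th rq)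
  have mu: "theta k x r q kb1 + lam k x r q kb1 = Mu (real k) (real q) (real kb1) (S_alpha x r (q-1) + x q) (S_beta x (q-1) kb1 - x q)"
    by (simp add: mu_Mu Sa Sb)
  have mu0: "theta k x r (q-1) kb1 + lam k x r (q-1) kb1 = Mu (real k) (real q - 1) (real kb1) (S_alpha x r (q-1)) (S_beta x (q-1) kb1)"
    by (simp only: mu_Mu rq)
  have e1: "RR (real k) (real q) (real kb1) * (theta k x r q kb1 - theta k x r (q-1) kb1)
      = real k * (theta k x r (q-1) kb1 + lam k x r (q-1) kb1 - x q)"
  proof -
    have "RR (real k) (real q) (real kb1) * (Th (real k) (real q) (real kb1) (S_alpha x r (q-1) + x q) (S_beta x (q-1) kb1 - x q)
       - Th (real k) (real q - 1) (real kb1) (S_alpha x r (q-1)) (S_beta x (q-1) kb1))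
       = real k * (Mu (real k) (real q - 1) (real kb1) (S_alpha x r (q-1)) (S_beta x (q-1) kb1) - x q)"
      by (rule algA1) (use R0 R1 in auto)
    then show ?thesis unfolding th[symmetric] th0[symmetric] mu0[symmetric] .
  qed
  have e2: "RR (real k) (real q) (real kb1) * (theta k x r q kb1 + lam k x r q kb1 - x q)
      = RR (real k) (real q - 1) (real kb1) * (theta k x r (q-1) kb1 + lam k x r (q-1) kb1 - x q)"
    unfolding mu mu0 using algA2 R0 R1 by simp
  have "0 \<le> RR (real k) (real q) (real kb1) * (theta k x r q kb1 - theta k x r (q-1) kb1)"
    using e1 IH by simp
  hence g1: "theta k x r (q-1) kb1 \<le> theta k x r q kb1" using R1 by (simp add: zero_le_mult_iff)
  have "0 \<le> RR (real k) (real q) (real kb1) * (theta k x r q kb1 + lam k x r q kb1 - x q)"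
    using e2 IH R0 by simp
  hence g2: "x q \<le> theta k x r q kb1 + lam k x r q kb1" using R1 by (simp add: zero_le_mult_iff)
  have "x (q+1) \<le> x q" using mono[of q "q+1"] q1 kn by simp
  then show ?case using IH g1 g2 unfolding q_def by simp
qed

lemma partB:
  fixes n k :: nat and r :: real and x :: "nat \<Rightarrow> real"
  assumes kn: "k \<le> n" and k1: "1 \<le> k"
    and mono: "\<And>i j. 1 \<le> i \<Longrightarrow> i \<le> j \<Longrightarrow> j \<le> n \<Longrightarrow> x j \<le> x i"
    and kb: "kb0 \<le> k - 1" "k \<le> kb1" "kb1 \<le> n"
    and k4: "kkt4 n k x r kb0 kb1"
  shows "k + d \<le> kb1 \<Longrightarrow> theta k x r kb0 (kb1-d) \<le> theta k x r kb0 kb1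
      \<and> theta k x r kb0 (kb1-d) \<le> x (kb1-d)"
proof (induction d)
  case 0
  have "xext n x kb1 = ereal (x kb1)" using kb k1 by (intro xext_in) auto
  then show ?case using k4 unfolding kkt4_def by simp
next
  case (Suc d)
  define m where "m = kb1 - Suc d"
  have mm: "kb1 - d = m + 1" using Suc.prems unfolding m_def by simp
  have IH: "theta k x r kb0 (m+1) \<le> theta k x r kb0 kb1" "theta k x r kb0 (m+1) \<le> x (m+1)"
    using Suc mm by auto
  have m1: "k \<le> m" "m < kb1" using Suc.prems unfolding m_def by auto
  have kb0k: "kb0 < k" using kb k1 by simp
  have R0: "RR (real k) (real kb0) (real m) > 0" using RR_pos[of kb0 k m] m1 kb0k by simp
  have R1: "RR (real k) (real kb0) (real m + 1) > 0" using RR_pos[of kb0 k "m+1"] m1 kb0k by (simp add: add.commute)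
  have Sb: "S_beta x kb0 (m+1) = S_beta x kb0 m + x (m+1)" using Sb_step1 m1 kb0k by simp
  have th: "theta k x r kb0 (m+1) = Th (real k) (real kb0) (real m + 1) (S_alpha x r kb0) (S_beta x kb0 m + x (m+1))"
    by (simp only: theta_Th Sb of_nat_add of_nat_1)
  have e: "RR (real k) (real kb0) (real m) * (theta k x r kb0 (m+1) - theta k x r kb0 m)
     = real kb0 * (x (m+1) - theta k x r kb0 (m+1))"
  proof -
    have "RR (real k) (real kb0) (real m) * (Th (real k) (real kb0) (real m + 1) (S_alpha x r kb0) (S_beta x kb0 m + x (m+1))
       - Th (real k) (real kb0) (real m) (S_alpha x r kb0) (S_beta x kb0 m))
       = real kb0 * (x (m+1) - Th (real k) (real kb0) (real m + 1) (S_alpha x r kb0) (S_beta x kb0 m + x (m+1)))"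
      by (rule algB1) (use R0 R1 in auto)
    then show ?thesis unfolding th[symmetric] theta_Th[symmetric] .
  qed
  have "0 \<le> RR (real k) (real kb0) (real m) * (theta k x r kb0 (m+1) - theta k x r kb0 m)"
    using e IH by simp
  hence g: "theta k x r kb0 m \<le> theta k x r kb0 (m+1)" using R0 by (simp add: zero_le_mult_iff)
  have "x (m+1) \<le> x m" using mono[of m "m+1"] m1 kb k1 by simp
  then show ?case using IH g unfolding m_def[symmetric] by simp
qed

theorem lemma3p6:
  fixes n k :: nat and r :: real and x :: "nat \<Rightarrow> real" and k0 k1 kb0 kb1 :: nat
  assumes "n \<ge> 2" and "1 \<le> k" and "k \<le> n"
    and "\<And>i j. 1 \<le> i \<Longrightarrow> i \<le> j \<Longrightarrow> j \<le> n \<Longrightarrow> x j \<le> x i"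
    and "(\<Sum>i=1..k. x i) > r"
    and "esgs_inc_transition n k x r k0 k1"
    and "kb0 \<le> k - 1" and "k \<le> kb1" and "kb1 \<le> n"
    and "all_kkt n k x r kb0 kb1"
  shows "kb0 \<le> k0 \<and> kb1 \<ge> k1"
proof -
  note kn = assms(3) and k1 = assms(2) and mono = assms(4) and kb = assms(7,8,9)
  have K: "kkt1 n k x r kb0 kb1" "kkt2 n k x r kb0 kb1" "kkt3 n k x r kb0 kb1"
     "kkt4 n k x r kb0 kb1" "kkt5 n k x r kb0 kb1" using assms(10) unfolding all_kkt_def by auto
  have A: "kkt5 n k x r j kb1" if j: "kb0 \<le> j" "j < k" for j
  proof (cases "kb1 = n")
    case True
    then show ?thesis unfolding kkt5_def xext_def by simp
  next
    case False
    have xe: "xext n x (kb1+1) = ereal (x (kb1+1))" using False unfolding xext_def by simp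
    have "theta k x r kb0 kb1 \<le> theta k x r (kb0 + (j-kb0)) kb1"
      using partA[OF kn k1 mono kb K(3), of "j-kb0"] j by simp
    then show ?thesis using K(5) j unfolding kkt5_def xe by simp
  qed
  have B: "kkt2 n k x r kb0 m" if m: "k \<le> m" "m \<le> kb1" for m
  proof (cases "kb0 = 0")
    case True
    then show ?thesis unfolding kkt2_def xext_def by simp
  next
    case False
    have xe: "xext n x kb0 = ereal (x kb0)" using False kb kn by (intro xext_in) auto
    have "theta k x r kb0 (kb1 - (kb1-m)) \<le> theta k x r kb0 kb1"
      using partB[OF kn k1 mono kb K(4), of "kb1-m"] m by simp
    hence le: "theta k x r kb0 m \<le> theta k x r kb0 kb1" using m by simp
    have kb0k: "kb0 < k" using kb k1 by simp
    have R0: "RR (real k) (real kb0) (real m) > 0" using RR_pos[of kb0 k m] m kb0k by simp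
    have R1: "RR (real k) (real kb0) (real kb1) > 0" using RR_pos[of kb0 k kb1] m kb0k by simp
    have "theta k x r kb0 m + lam k x r kb0 m = (S_alpha x r kb0 + real k * theta k x r kb0 m) / real kb0"
      using mu_Mu[of k x r kb0 m] theta_Th[of k x r kb0 m] algB2[of "real k" "real kb0" "real m"] R0 False by simp
    also have "\<dots> \<le> (S_alpha x r kb0 + real k * theta k x r kb0 kb1) / real kb0"
      using le by (auto intro!: divide_right_mono mult_left_mono)
    also have "\<dots> = theta k x r kb0 kb1 + lam k x r kb0 kb1"
      using mu_Mu[of k x r kb0 kb1] theta_Th[of k x r kb0 kb1] algB2[of "real k" "real kb0" "real kb1"] R1 False by simp
    finally show ?thesis using K(2) unfolding kkt2_def xe by simp
  qed
  have inv: "esgs_visits n k x r a b \<Longrightarrow> kb0 \<le> a \<and> b \<le> kb1 \<and> a < k \<and> k \<le> b" for a b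
  proof (induction rule: esgs_visits.induct)
    case start
    then show ?case using kb k1 by simp
  next
    case (inc a b)
    have "b \<noteq> kb1" using A[of a] inc by auto
    then show ?case using inc by simp
  next
    case (dec a b)
    have "a \<noteq> kb0" using B[of b] dec by auto
    then show ?case using dec by auto
  qed
  show ?thesis using inv assms(6) unfolding esgs_inc_transition_def by auto
qed

end
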